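(* Let $n \geq 2$ be an integer, let $\mathcal{V}_1,\mathcal{V}_2$ be vector spaces over a field $\mathbb{F}$, and let $E=\{x_a \otimes y_a: a \in[n] \}$ be a multiset of product tensors in $\mathcal{V}_1\otimes\mathcal{V}_2$ (with $x_a\in\mathcal{V}_1\setminus\{0\}$, $y_a\in\mathcal{V}_2\setminus\{0\}$). Let $d_1=\dim\operatorname{span} \{ x_a: a \in [n]\}$ and $d_2=\dim\operatorname{span} \{ y_a: a \in [n]\}$. If $E$ is connected, then $\dim\operatorname{span}(E)\geq d_1+d_2-1$.
   Context: $[n]=\{1,\dots,n\}$. A multiset of non-zero vectors $\{v_1,\dots,v_n\}$ ($n\ge2$) splits if there is a sub-multiset $S$ with $1\le |S|\le n-1$ such that $\operatorname{span}\{v_1,\dots,v_n\}=\operatorname{span}(S)\oplus\operatorname{span}(S^c)$, where $S^c$ is the complementary sub-multiset; it is connected if it does not split. *)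

theory Defs
  imports Complex_Main "HOL-Library.Function_Algebras"
begin

text \<open>Vector spaces are modelled as spaces of functions from an index type into the
field, with pointwise scalar multiplication (every vector space embeds linearly
into such a space).\<close>

definition fscale :: "'a::field \<Rightarrow> ('i \<Rightarrow> 'a) \<Rightarrow> ('i \<Rightarrow> 'a)" where
  "fscale c f = (\<lambda>i. c * f i)"

lemma vector_space_fscale: "vector_space (fscale :: 'a::field \<Rightarrow> ('i \<Rightarrow> 'a) \<Rightarrow> _)"
  by unfold_locales (auto simp: fscale_def algebra_simps)

abbreviation fspan :: "('i \<Rightarrow> 'a::field) set \<Rightarrow> ('i \<Rightarrow> 'a) set" where
  "fspan \<equiv> module.span fscale"

abbreviation fdim :: "('i \<Rightarrow> 'a::field) set \<Rightarrow> nat" where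
  "fdim \<equiv> vector_space.dim fscale"

text \<open>Product tensor: x \<otimes> y realised as the function (i,j) \<mapsto> x i * y j
(the canonical injective embedding of the algebraic tensor product).\<close>

definition tprod :: "('i \<Rightarrow> 'a::field) \<Rightarrow> ('j \<Rightarrow> 'a) \<Rightarrow> ('i \<times> 'j \<Rightarrow> 'a)" where
  "tprod x y = (\<lambda>(i, j). x i * y j)"

text \<open>A multiset {v_1,...,v_n} is given as an indexed family v on [n] = {1..n}.
A sub-multiset S corresponds to a subset of the index set.\<close>

definition splits :: "nat \<Rightarrow> (nat \<Rightarrow> ('i \<Rightarrow> 'a::field)) \<Rightarrow> bool" where
  "splits n v \<longleftrightarrow> (\<exists>S. S \<subseteq> {1..n} \<and> 1 \<le> card S \<and> card S \<le> n - 1 \<and>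
     fspan (v ` {1..n}) =
       {p + q | p q. p \<in> fspan (v ` S) \<and> q \<in> fspan (v ` ({1..n} - S))} \<and>
     fspan (v ` S) \<inter> fspan (v ` ({1..n} - S)) = {0})"

definition connected_family :: "nat \<Rightarrow> (nat \<Rightarrow> ('i \<Rightarrow> 'a::field)) \<Rightarrow> bool" where
  "connected_family n v \<longleftrightarrow> \<not> splits n v"

end

theory Submission
  imports Defs
begin


interpretation fs: vector_space "fscale :: 'a::field \<Rightarrow> ('i \<Rightarrow> 'a) \<Rightarrow> ('i \<Rightarrow> 'a)"
  by (rule vector_space_fscale)

lemma sum_fun_app: "(\<Sum>k\<in>K. f k) j = (\<Sum>k\<in>K. f k j)"
  by (induct K rule: infinite_finite_induct) auto

lemma fscale_app: "fscale c f i = c * f i"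
  by (simp add: fscale_def)

lemma rep:
  fixes g :: "nat \<Rightarrow> ('i \<Rightarrow> 'a::field)"
  assumes "finite K"
  shows "z \<in> fspan (A \<union> g ` K) \<Longrightarrow> \<exists>u m. u \<in> fspan A \<and> z = u + (\<Sum>k\<in>K. fscale (m k) (g k))"
  using assms
proof (induct K arbitrary: z rule: finite_induct)
  case empty
  then show ?case by (intro exI[of _ z] exI[of _ "\<lambda>_. 0"]) auto
next
  case (insert k K)
  have "A \<union> g ` insert k K = insert (g k) (A \<union> g ` K)" by auto
  with insert(4) have "z \<in> fspan (insert (g k) (A \<union> g ` K))" by simp
  then obtain c where c: "z - fscale c (g k) \<in> fspan (A \<union> g ` K)"
    using fs.span_breakdown_eq by blast
  from insert(3)[OF c] obtain u m where um: "u \<in> fspan A"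
    "z - fscale c (g k) = u + (\<Sum>k\<in>K. fscale (m k) (g k))" by blast
  have "(\<Sum>k'\<in>insert k K. fscale ((m(k := c)) k') (g k')) = fscale c (g k) + (\<Sum>k'\<in>K. fscale (m k') (g k'))"
    using insert(1,2) by (simp add: sum.insert) (intro sum.cong; auto)
  then show ?case using um by (intro exI[of _ u] exI[of _ "m(k := c)"]) (auto simp: algebra_simps)
qed

lemma dim_insert_le:
  fixes S :: "('i \<Rightarrow> 'a::field) set"
  assumes "finite S" shows "fdim (insert z S) \<le> fdim S + 1"
proof -
  obtain B where B: "B \<subseteq> S" "fs.independent B" "S \<subseteq> fspan B" "card B = fdim S"
    using fs.basis_exists by blast
  have fB: "finite B" using B(1) assms finite_subset by auto
  have "insert z S \<subseteq> fspan (insert z B)"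
    using B(3) fs.span_mono[of B "insert z B"] fs.span_base[of z "insert z B"] by auto
  then have "fdim (insert z S) \<le> card (insert z B)"
    using fs.dim_le_card fB by blast
  also have "\<dots> \<le> card B + 1" using fB by (simp add: card_insert_if)
  finally show ?thesis using B(4) by simp
qed

lemma dim_insert_notin:
  fixes S :: "('i \<Rightarrow> 'a::field) set"
  assumes "finite S" "z \<notin> fspan S" shows "fdim (insert z S) = fdim S + 1"
proof -
  obtain B where B: "B \<subseteq> S" "fs.independent B" "S \<subseteq> fspan B" "card B = fdim S"
    using fs.basis_exists by blast
  have fB: "finite B" using B(1) assms finite_subset by auto
  have spB: "fspan B = fspan S"
    by (simp add: fs.span_eq B(3) subset_trans[OF B(1) fs.span_superset])
  have zB: "z \<notin> fspan B" using spB assms(2) by simp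
  have ind: "fs.independent (insert z B)" using fs.independent_insertI[OF zB B(2)] .
  have "insert z S \<subseteq> fspan (insert z B)"
    using B(3) fs.span_mono[of B "insert z B"] fs.span_base[of z "insert z B"] by auto
  then have "card (insert z B) = fdim (insert z S)"
    using fs.basis_card_eq_dim[of "insert z B" "insert z S"] ind B(1) by auto
  moreover have "z \<notin> B" using zB fs.span_base by blast
  ultimately show ?thesis using fB B(4) by simp
qed

lemma dim_le_span:
  fixes S :: "('i \<Rightarrow> 'a::field) set"
  assumes "S \<subseteq> fspan T" "finite T" shows "fdim S \<le> fdim T"
proof -
  obtain B where B: "B \<subseteq> T" "fs.independent B" "T \<subseteq> fspan B" "card B = fdim T"
    using fs.basis_exists by blast
  have fB: "finite B" using B(1) assms finite_subset by auto
  have "fspan T \<subseteq> fspan B" using B(3) by (rule fs.span_minimal) simp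
  then have "S \<subseteq> fspan B" using assms(1) by (rule subset_trans[rotated])
  then have "fdim S \<le> card B" by (rule fs.dim_le_card[OF _ fB])
  then show ?thesis using B(4) by simp
qed

lemma dim_union_le:
  fixes g :: "nat \<Rightarrow> ('i \<Rightarrow> 'a::field)"
  assumes "finite A" "finite K"
  shows "fdim (A \<union> g ` K) \<le> fdim A + card K"
  using assms(2)
proof (induct K rule: finite_induct)
  case empty then show ?case by simp
next
  case (insert k K)
  have "A \<union> g ` insert k K = insert (g k) (A \<union> g ` K)" by auto
  then have "fdim (A \<union> g ` insert k K) \<le> fdim (A \<union> g ` K) + 1"
    using dim_insert_le[of "A \<union> g ` K" "g k"] assms insert by simp
  then show ?case using insert by simp
qed

lemma dim_union_indep:
  fixes g :: "nat \<Rightarrow> ('i \<Rightarrow> 'a::field)"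
  assumes "finite A" "finite K"
  shows "(\<forall>e. (\<Sum>k\<in>K. fscale (e k) (g k)) \<in> fspan A \<longrightarrow> (\<forall>k\<in>K. e k = 0))
     \<Longrightarrow> fdim (A \<union> g ` K) = fdim A + card K"
  using assms(2)
proof (induct K rule: finite_induct)
  case empty then show ?case by simp
next
  case (insert k K)
  have hK: "\<forall>e. (\<Sum>k\<in>K. fscale (e k) (g k)) \<in> fspan A \<longrightarrow> (\<forall>k\<in>K. e k = 0)"
  proof (intro allI impI)
    fix e assume h: "(\<Sum>k\<in>K. fscale (e k) (g k)) \<in> fspan A"
    have c1: "(\<Sum>k'\<in>K. fscale ((e(k := 0)) k') (g k')) = (\<Sum>k'\<in>K. fscale (e k') (g k'))"
      by (rule sum.cong) (use insert(2) in auto)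
    have "(\<Sum>k'\<in>insert k K. fscale ((e(k := 0)) k') (g k')) = (\<Sum>k\<in>K. fscale (e k) (g k))"
      using insert(1,2) c1 by (simp add: sum.insert)
    then have "\<forall>k'\<in>insert k K. (e(k := 0)) k' = 0" using insert(4) h by metis
    then show "\<forall>k'\<in>K. e k' = 0" using insert(2) by (metis fun_upd_other insertCI)
  qed
  have nin: "g k \<notin> fspan (A \<union> g ` K)"
  proof
    assume "g k \<in> fspan (A \<union> g ` K)"
    then obtain u m where um: "u \<in> fspan A" "g k = u + (\<Sum>k\<in>K. fscale (m k) (g k))"
      using rep[OF insert(1)] by blast
    define e where "e = (\<lambda>k'. - m k')(k := 1)"
    have "(\<Sum>k'\<in>insert k K. fscale (e k') (g k')) = g k - (\<Sum>k\<in>K. fscale (m k) (g k))"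
    proof -
      have "(\<Sum>k'\<in>K. fscale (e k') (g k')) = (\<Sum>k'\<in>K. - fscale (m k') (g k'))"
        by (rule sum.cong) (use insert(2) in \<open>auto simp: e_def fscale_def\<close>)
      also have "\<dots> = - (\<Sum>k\<in>K. fscale (m k) (g k))" by (simp add: sum_negf)
      finally have "(\<Sum>k'\<in>K. fscale (e k') (g k')) = - (\<Sum>k\<in>K. fscale (m k) (g k))" .
      moreover have "fscale (e k) (g k) = g k" by (simp add: e_def)
      ultimately show ?thesis using insert(1,2) by (simp add: sum.insert)
    qed
    also have "\<dots> = u" using um by simp
    finally have "\<forall>k'\<in>insert k K. e k' = 0" using insert(4) um(1) by metis
    then show False by (simp add: e_def)
  qed
  have "A \<union> g ` insert k K = insert (g k) (A \<union> g ` K)" by auto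
  then have "fdim (A \<union> g ` insert k K) = fdim (A \<union> g ` K) + 1"
    using dim_insert_notin[of "A \<union> g ` K" "g k"] assms insert nin by simp
  then show ?case using insert hK by simp
qed



lemma slice_y:
  fixes x :: "nat \<Rightarrow> 'i \<Rightarrow> 'a::field" and y :: "nat \<Rightarrow> 'j \<Rightarrow> 'a"
  assumes "w \<in> fspan ((\<lambda>a. tprod (x a) (y a)) ` S)"
  shows "(\<lambda>j. w (i, j)) \<in> fspan (y ` S)"
proof -
  let ?P = "{w :: 'i \<times> 'j \<Rightarrow> 'a. (\<lambda>j. w (i, j)) \<in> fspan (y ` S)}"
  have sub: "fs.subspace ?P"
  proof (rule fs.subspaceI)
    have "(\<lambda>j. (0::'i \<times> 'j \<Rightarrow> 'a) (i, j)) = 0" by (simp add: fun_eq_iff)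
    then show "0 \<in> ?P" using fs.span_zero by simp
  next
    fix a b assume "a \<in> ?P" "b \<in> ?P"
    moreover have "(\<lambda>j. (a + b) (i, j)) = (\<lambda>j. a (i, j)) + (\<lambda>j. b (i, j))" by (simp add: fun_eq_iff)
    ultimately show "a + b \<in> ?P" using fs.span_add by simp
  next
    fix c a assume "a \<in> ?P"
    moreover have "(\<lambda>j. fscale c a (i, j)) = fscale c (\<lambda>j. a (i, j))" by (simp add: fun_eq_iff fscale_def)
    ultimately show "fscale c a \<in> ?P" using fs.span_scale by simp
  qed
  have "(\<lambda>a. tprod (x a) (y a)) ` S \<subseteq> ?P"
  proof
    fix w assume "w \<in> (\<lambda>a. tprod (x a) (y a)) ` S"
    then obtain s where s: "s \<in> S" "w = tprod (x s) (y s)" by blast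
    have "(\<lambda>j. w (i, j)) = fscale (x s i) (y s)" by (simp add: s fun_eq_iff fscale_def tprod_def)
    moreover have "y s \<in> fspan (y ` S)" "x s \<in> fspan (x ` S)" using s(1) by (auto intro: fs.span_base)
    ultimately show "w \<in> ?P" using fs.span_scale by simp
  qed
  then have "fspan ((\<lambda>a. tprod (x a) (y a)) ` S) \<subseteq> ?P" using fs.span_minimal sub by blast
  then show ?thesis using assms by blast
qed

lemma slice_x:
  fixes x :: "nat \<Rightarrow> 'i \<Rightarrow> 'a::field" and y :: "nat \<Rightarrow> 'j \<Rightarrow> 'a"
  assumes "w \<in> fspan ((\<lambda>a. tprod (x a) (y a)) ` S)"
  shows "(\<lambda>i. w (i, j)) \<in> fspan (x ` S)"
proof -
  let ?P = "{w :: 'i \<times> 'j \<Rightarrow> 'a. (\<lambda>i. w (i, j)) \<in> fspan (x ` S)}"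
  have sub: "fs.subspace ?P"
  proof (rule fs.subspaceI)
    have "(\<lambda>i. (0::'i \<times> 'j \<Rightarrow> 'a) (i, j)) = 0" by (simp add: fun_eq_iff)
    then show "0 \<in> ?P" using fs.span_zero by simp
  next
    fix a b assume "a \<in> ?P" "b \<in> ?P"
    moreover have "(\<lambda>i. (a + b) (i, j)) = (\<lambda>i. a (i, j)) + (\<lambda>i. b (i, j))" by (simp add: fun_eq_iff)
    ultimately show "a + b \<in> ?P" using fs.span_add by simp
  next
    fix c a assume "a \<in> ?P"
    moreover have "(\<lambda>i. fscale c a (i, j)) = fscale c (\<lambda>i. a (i, j))" by (simp add: fun_eq_iff fscale_def)
    ultimately show "fscale c a \<in> ?P" using fs.span_scale by simp
  qed
  have "(\<lambda>a. tprod (x a) (y a)) ` S \<subseteq> ?P"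
  proof
    fix w assume "w \<in> (\<lambda>a. tprod (x a) (y a)) ` S"
    then obtain s where s: "s \<in> S" "w = tprod (x s) (y s)" by blast
    have "(\<lambda>i. w (i, j)) = fscale (y s j) (x s)" by (simp add: s fun_eq_iff fscale_def tprod_def mult.commute)
    moreover have "y s \<in> fspan (y ` S)" "x s \<in> fspan (x ` S)" using s(1) by (auto intro: fs.span_base)
    ultimately show "w \<in> ?P" using fs.span_scale by simp
  qed
  then have "fspan ((\<lambda>a. tprod (x a) (y a)) ` S) \<subseteq> ?P" using fs.span_minimal sub by blast
  then show ?thesis using assms by blast
qed

lemma exists_B:
  fixes g :: "nat \<Rightarrow> ('i \<Rightarrow> 'a::field)"
  assumes "finite D"
  shows "\<exists>B\<subseteq>D. (\<forall>d\<in>D. g d \<in> fspan (A \<union> g ` B)) \<and>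
     (\<forall>\<alpha>. (\<Sum>b\<in>B. fscale (\<alpha> b) (g b)) \<in> fspan A \<longrightarrow> (\<forall>b\<in>B. \<alpha> b = 0))"
  using assms
proof (induction "card D" arbitrary: D rule: less_induct)
  case less
  show ?case
  proof (cases "\<forall>\<alpha>. (\<Sum>b\<in>D. fscale (\<alpha> b) (g b)) \<in> fspan A \<longrightarrow> (\<forall>b\<in>D. \<alpha> b = 0)")
    case True
    then show ?thesis by (intro exI[of _ D]) (auto intro: fs.span_base)
  next
    case False
    then obtain \<alpha> b0 where h: "(\<Sum>b\<in>D. fscale (\<alpha> b) (g b)) \<in> fspan A" "b0 \<in> D" "\<alpha> b0 \<noteq> 0" by blast
    have fD': "finite (D - {b0})" using less.prems by simp
    have cl: "card (D - {b0}) < card D" by (rule card_Diff1_less[OF less.prems h(2)])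
    obtain B where B: "B \<subseteq> D - {b0}" "\<forall>d\<in>D-{b0}. g d \<in> fspan (A \<union> g ` B)"
      "\<forall>\<alpha>. (\<Sum>b\<in>B. fscale (\<alpha> b) (g b)) \<in> fspan A \<longrightarrow> (\<forall>b\<in>B. \<alpha> b = 0)"
      using less.hyps[OF cl fD'] by blast
    have s1: "A \<union> g ` (D - {b0}) \<subseteq> fspan (A \<union> g ` B)"
    proof (intro Un_least)
      show "A \<subseteq> fspan (A \<union> g ` B)" using fs.span_superset[of "A \<union> g ` B"] by blast
      show "g ` (D - {b0}) \<subseteq> fspan (A \<union> g ` B)" using B(2) by blast
    qed
    have spsub: "fspan (A \<union> g ` (D - {b0})) \<subseteq> fspan (A \<union> g ` B)"
      using s1 by (rule fs.span_minimal) simp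
    have gb0: "g b0 \<in> fspan (A \<union> g ` (D - {b0}))"
    proof -
      have sumsplit: "(\<Sum>b\<in>D. fscale (\<alpha> b) (g b)) = fscale (\<alpha> b0) (g b0) + (\<Sum>b\<in>D-{b0}. fscale (\<alpha> b) (g b))"
        using sum.remove[OF less.prems h(2)] by simp
      have e1: "(\<Sum>b\<in>D. fscale (\<alpha> b) (g b)) - (\<Sum>b\<in>D-{b0}. fscale (\<alpha> b) (g b)) = fscale (\<alpha> b0) (g b0)"
        using sumsplit by simp
      have "g b0 = fscale (inverse (\<alpha> b0)) (fscale (\<alpha> b0) (g b0))"
        using h(3) by (simp add: fun_eq_iff fscale_def)
      then have geq: "g b0 = fscale (inverse (\<alpha> b0)) ((\<Sum>b\<in>D. fscale (\<alpha> b) (g b)) - (\<Sum>b\<in>D-{b0}. fscale (\<alpha> b) (g b)))"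
        using e1 by simp
      have m1: "(\<Sum>b\<in>D. fscale (\<alpha> b) (g b)) \<in> fspan (A \<union> g ` (D - {b0}))"
        using h(1) fs.span_mono[of A "A \<union> g ` (D - {b0})"] by blast
      have m2: "(\<Sum>b\<in>D-{b0}. fscale (\<alpha> b) (g b)) \<in> fspan (A \<union> g ` (D - {b0}))"
        by (intro fs.span_sum fs.span_scale fs.span_base) auto
      have "fscale (inverse (\<alpha> b0)) ((\<Sum>b\<in>D. fscale (\<alpha> b) (g b)) - (\<Sum>b\<in>D-{b0}. fscale (\<alpha> b) (g b)))
           \<in> fspan (A \<union> g ` (D - {b0}))"
        by (rule fs.span_scale, rule fs.span_diff[OF m1 m2])
      then show ?thesis using geq by simp
    qed
    show ?thesis
      apply (intro exI[of _ B] conjI)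
      using B spsub gb0 by auto
  qed
qed



lemma step:
  fixes x :: "nat \<Rightarrow> 'i \<Rightarrow> 'a::field" and y :: "nat \<Rightarrow> 'j \<Rightarrow> 'a" and c :: "nat \<Rightarrow> 'a"
  assumes fU: "finite U" and fD: "finite D" and disj: "U \<inter> D = {}" and Dne: "D \<noteq> {}"
    and cnz: "\<forall>d\<in>D. c d \<noteq> 0"
    and vU: "(\<Sum>d\<in>D. fscale (c d) (tprod (x d) (y d))) \<in> fspan ((\<lambda>a. tprod (x a) (y a)) ` U)"
    and vnz: "(\<Sum>d\<in>D. fscale (c d) (tprod (x d) (y d))) \<noteq> 0"
    and ind: "\<forall>d0\<in>D. \<forall>e. (\<Sum>d\<in>D-{d0}. fscale (e d) (tprod (x d) (y d))) \<in> fspan ((\<lambda>a. tprod (x a) (y a)) ` U)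
                 \<longrightarrow> (\<forall>d\<in>D-{d0}. e d = 0)"
  shows "fdim (x`(U\<union>D)) + fdim (y`(U\<union>D)) + fdim ((\<lambda>a. tprod (x a) (y a))`U)
         \<le> fdim (x`U) + fdim (y`U) + fdim ((\<lambda>a. tprod (x a) (y a))`(U\<union>D))"
proof -
  define t where "t = (\<lambda>a. tprod (x a) (y a))"
  define v where "v = (\<Sum>d\<in>D. fscale (c d) (t d))"
  have vU': "v \<in> fspan (t`U)" and vnz': "v \<noteq> 0" using vU vnz by (simp_all add: t_def v_def)
  have vapp: "v (i,j) = (\<Sum>d\<in>D. c d * (x d i * y d j))" for i j
    by (simp add: v_def t_def sum_fun_app fscale_def tprod_def)
  obtain d0 where d0: "d0 \<in> D" using Dne by blast
  have a1: "fdim (t`U \<union> t`(D-{d0})) = fdim (t`U) + card (D - {d0})"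
    by (rule dim_union_indep) (use fU fD ind d0 in \<open>auto simp: t_def\<close>)
  have a2: "fdim (t`U \<union> t`(D-{d0})) \<le> fdim (t`(U\<union>D))"
    by (rule dim_le_span) (use fU fD in \<open>auto intro: fs.span_base\<close>)
  have cardD: "card (D - {d0}) = card D - 1" using d0 fD by simp
  obtain B where B: "B \<subseteq> D" "\<forall>d\<in>D. x d \<in> fspan (x`U \<union> x`B)"
    "\<forall>\<alpha>. (\<Sum>b\<in>B. fscale (\<alpha> b) (x b)) \<in> fspan (x`U) \<longrightarrow> (\<forall>b\<in>B. \<alpha> b = 0)"
    using exists_B[OF fD, of x "x`U"] by blast
  have fB: "finite B" using B(1) fD finite_subset by auto
  have c1: "fdim (x`(U\<union>D)) \<le> fdim (x`U) + card B"
  proof -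
    have "fdim (x`(U\<union>D)) \<le> fdim (x`U \<union> x`B)"
      by (rule dim_le_span) (use B(2) fU fB in \<open>auto intro: fs.span_base\<close>)
    also have "\<dots> \<le> fdim (x`U) + card B" using dim_union_le fU fB by blast
    finally show ?thesis .
  qed
  define K2 where "K2 = D - B"
  have fK2: "finite K2" using fD K2_def by simp
  have DBK: "D = B \<union> K2" "B \<inter> K2 = {}" using B(1) K2_def by auto
  have "\<forall>d\<in>K2. \<exists>p. fst p \<in> fspan (x`U) \<and> x d = fst p + (\<Sum>b\<in>B. fscale (snd p b) (x b))"
  proof
    fix d assume "d \<in> K2"
    then have "x d \<in> fspan (x`U \<union> x`B)" using B(2) K2_def by auto
    then obtain u m where "u \<in> fspan (x`U)" "x d = u + (\<Sum>b\<in>B. fscale (m b) (x b))"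
      using rep[OF fB] by blast
    then show "\<exists>p. fst p \<in> fspan (x`U) \<and> x d = fst p + (\<Sum>b\<in>B. fscale (snd p b) (x b))"
      by (intro exI[of _ "(u, m)"]) simp
  qed
  then obtain p where p: "\<forall>d\<in>K2. fst (p d) \<in> fspan (x`U) \<and> x d = fst (p d) + (\<Sum>b\<in>B. fscale (snd (p d) b) (x b))"
    by metis
  define u where "u d = fst (p d)" for d
  define m where "m d = snd (p d)" for d
  have umU: "u d \<in> fspan (x`U)" if "d \<in> K2" for d using p that by (simp add: u_def)
  have umx: "x d i = u d i + (\<Sum>b\<in>B. m d b * x b i)" if "d \<in> K2" for d i
  proof -
    have "x d = u d + (\<Sum>b\<in>B. fscale (m d b) (x b))" using p that by (simp add: u_def m_def)
    then show ?thesis by (simp add: sum_fun_app fscale_def)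
  qed
  have yb: "y b \<in> fspan (y`K2)" if bB: "b \<in> B" for b
  proof -
    have zero: "c b * y b j + (\<Sum>d\<in>K2. c d * y d j * m d b) = 0" for j
    proof -
      define \<alpha> where "\<alpha> b' = c b' * y b' j + (\<Sum>d\<in>K2. c d * y d j * m d b')" for b'
      have sj: "(\<lambda>i. v (i,j)) \<in> fspan (x`U)" using slice_x[OF vU'[unfolded t_def]] .
      have eq: "(\<Sum>b'\<in>B. fscale (\<alpha> b') (x b')) = (\<lambda>i. v (i,j)) - (\<Sum>d\<in>K2. fscale (c d * y d j) (u d))"
      proof (rule ext)
        fix i
        have "v (i,j) = (\<Sum>d\<in>B. c d * (x d i * y d j)) + (\<Sum>d\<in>K2. c d * (x d i * y d j))"
          unfolding vapp DBK(1) by (rule sum.union_disjoint[OF fB fK2 DBK(2)])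
        also have "(\<Sum>d\<in>K2. c d * (x d i * y d j))
            = (\<Sum>d\<in>K2. c d * y d j * u d i + (\<Sum>b'\<in>B. c d * y d j * m d b' * x b' i))"
          by (rule sum.cong) (auto simp: umx algebra_simps sum_distrib_left)
        also have "\<dots> = (\<Sum>d\<in>K2. c d * y d j * u d i) + (\<Sum>b'\<in>B. \<Sum>d\<in>K2. c d * y d j * m d b' * x b' i)"
          by (simp add: sum.distrib sum.swap[of _ K2 B])
        finally have "v (i,j) = (\<Sum>d\<in>B. c d * (x d i * y d j)) + (\<Sum>d\<in>K2. c d * y d j * u d i)
            + (\<Sum>b'\<in>B. \<Sum>d\<in>K2. c d * y d j * m d b' * x b' i)" by simp
        moreover have "(\<Sum>b'\<in>B. fscale (\<alpha> b') (x b')) i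
            = (\<Sum>d\<in>B. c d * (x d i * y d j)) + (\<Sum>b'\<in>B. \<Sum>d\<in>K2. c d * y d j * m d b' * x b' i)"
          by (simp add: sum_fun_app fscale_def \<alpha>_def algebra_simps sum.distrib sum_distrib_left sum_distrib_right)
        moreover have "((\<lambda>i. v (i,j)) - (\<Sum>d\<in>K2. fscale (c d * y d j) (u d))) i
            = v (i,j) - (\<Sum>d\<in>K2. c d * y d j * u d i)"
          by (simp add: sum_fun_app fscale_def)
        ultimately show "(\<Sum>b'\<in>B. fscale (\<alpha> b') (x b')) i
            = ((\<lambda>i. v (i,j)) - (\<Sum>d\<in>K2. fscale (c d * y d j) (u d))) i" by simp
      qed
      have "(\<Sum>b'\<in>B. fscale (\<alpha> b') (x b')) \<in> fspan (x`U)"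
        unfolding eq by (intro fs.span_diff sj fs.span_sum fs.span_scale umU)
      then have "\<alpha> b = 0" using B(3) bB by blast
      then show ?thesis by (simp add: \<alpha>_def)
    qed
    have cb: "c b \<noteq> 0" using cnz bB B(1) by auto
    have "y b = (\<Sum>d\<in>K2. fscale (- (c d * m d b) / c b) (y d))"
    proof (rule ext)
      fix j
      from zero[of j] have "c b * y b j = - (\<Sum>d\<in>K2. c d * y d j * m d b)" by (simp add: eq_neg_iff_add_eq_0)
      then have "y b j = - (\<Sum>d\<in>K2. c d * y d j * m d b) / c b" using cb by (simp add: field_simps)
      then show "y b j = (\<Sum>d\<in>K2. fscale (- (c d * m d b) / c b) (y d)) j"
        by (simp add: sum_fun_app fscale_def sum_divide_distrib sum_negf[symmetric] algebra_simps)
    qed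
    moreover have "(\<Sum>d\<in>K2. fscale (- (c d * m d b) / c b) (y d)) \<in> fspan (y`K2)"
      by (intro fs.span_sum fs.span_scale fs.span_base) auto
    ultimately show ?thesis by simp
  qed
  obtain ij where ij: "v ij \<noteq> 0" using vnz' by (auto simp: fun_eq_iff)
  obtain i0 j0 where ij0: "v (i0, j0) \<noteq> 0" using ij by (cases ij) auto
  define z where "z = (\<lambda>j. v (i0,j))"
  have zU: "z \<in> fspan (y`U)" unfolding z_def using slice_y[OF vU'[unfolded t_def]] .
  have znz: "z \<noteq> 0" using ij0 z_def by (auto simp: fun_eq_iff)
  have zK2: "z \<in> fspan (y`K2)"
  proof -
    have "z = (\<Sum>d\<in>D. fscale (c d * x d i0) (y d))"
      by (rule ext) (simp add: z_def vapp sum_fun_app fscale_def mult.assoc)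
    moreover have "y d \<in> fspan (y`K2)" if "d \<in> D" for d
      using yb that K2_def by (cases "d \<in> B") (auto intro: fs.span_base)
    ultimately show ?thesis by (auto intro: fs.span_sum fs.span_scale)
  qed
  obtain u0 \<beta> where \<beta>: "u0 \<in> fspan {}" "z = u0 + (\<Sum>d\<in>K2. fscale (\<beta> d) (y d))"
    using rep[OF fK2, of z "{}" y] zK2 by auto
  have \<beta>': "z = (\<Sum>d\<in>K2. fscale (\<beta> d) (y d))" using \<beta> by simp
  obtain d1 where d1: "d1 \<in> K2" "\<beta> d1 \<noteq> 0"
  proof (rule ccontr)
    assume "\<not> thesis"
    then have "\<forall>d\<in>K2. \<beta> d = 0" using that by blast
    then have "z = 0" using \<beta>' by simp
    then show False using znz by simp
  qed
  have yd1: "y d1 \<in> fspan (y`U \<union> y`(K2 - {d1}))"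
  proof -
    have zs: "z = fscale (\<beta> d1) (y d1) + (\<Sum>d\<in>K2-{d1}. fscale (\<beta> d) (y d))"
      using \<beta>' sum.remove[OF fK2 d1(1)] by simp
    have e1: "z - (\<Sum>d\<in>K2-{d1}. fscale (\<beta> d) (y d)) = fscale (\<beta> d1) (y d1)" using zs by simp
    have "y d1 = fscale (inverse (\<beta> d1)) (fscale (\<beta> d1) (y d1))"
      using d1(2) by (simp add: fun_eq_iff fscale_def)
    then have geq: "y d1 = fscale (inverse (\<beta> d1)) (z - (\<Sum>d\<in>K2-{d1}. fscale (\<beta> d) (y d)))"
      using e1 by simp
    have m1: "z \<in> fspan (y`U \<union> y`(K2 - {d1}))"
      using zU fs.span_mono[of "y`U" "y`U \<union> y`(K2 - {d1})"] by blast
    have m2: "(\<Sum>d\<in>K2-{d1}. fscale (\<beta> d) (y d)) \<in> fspan (y`U \<union> y`(K2 - {d1}))"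
      by (intro fs.span_sum fs.span_scale fs.span_base) auto
    have "fscale (inverse (\<beta> d1)) (z - (\<Sum>d\<in>K2-{d1}. fscale (\<beta> d) (y d))) \<in> fspan (y`U \<union> y`(K2 - {d1}))"
      by (rule fs.span_scale, rule fs.span_diff[OF m1 m2])
    then show ?thesis using geq by simp
  qed
  have c2: "fdim (y`(U\<union>D)) \<le> fdim (y`U) + card (K2 - {d1})"
  proof -
    let ?T = "fspan (y`U \<union> y`(K2 - {d1}))"
    have K2sub: "y ` K2 \<subseteq> ?T"
    proof
      fix w assume "w \<in> y ` K2"
      then obtain d where "d \<in> K2" "w = y d" by blast
      then show "w \<in> ?T" using yd1 by (cases "d = d1") (auto intro: fs.span_base)
    qed
    then have K2sp: "fspan (y`K2) \<subseteq> ?T" by (rule fs.span_minimal) simp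
    have sub: "y`(U\<union>D) \<subseteq> ?T"
    proof
      fix w assume "w \<in> y`(U\<union>D)"
      then obtain a where a: "a \<in> U \<union> D" "w = y a" by blast
      show "w \<in> ?T"
      proof (cases "a \<in> U")
        case True then show ?thesis using a by (auto intro: fs.span_base)
      next
        case False
        then have "a \<in> B \<or> a \<in> K2" using a DBK by auto
        then show ?thesis using a yb K2sp K2sub by auto
      qed
    qed
    have "fdim (y`(U\<union>D)) \<le> fdim (y`U \<union> y`(K2-{d1}))" using dim_le_span[OF sub] fU fK2 by simp
    also have "\<dots> \<le> fdim (y`U) + card (K2 - {d1})" using dim_union_le fU fK2 by blast
    finally show ?thesis .
  qed
  have cards: "card B + card K2 = card D" using DBK fB fK2 card_Un_disjoint by metis
  have cK2: "card (K2 - {d1}) = card K2 - 1" "card K2 \<ge> 1" using d1 fK2 by (auto simp: card_gt_0_iff Suc_le_eq)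
  have cD: "card D \<ge> 1" using Dne fD by (simp add: card_gt_0_iff Suc_le_eq)
  show ?thesis using a1 a2 cardD c1 c2 cards cK2 cD unfolding t_def by linarith
qed



lemma main_ind:
  fixes x :: "nat \<Rightarrow> 'i \<Rightarrow> 'a::field" and y :: "nat \<Rightarrow> 'j \<Rightarrow> 'a"
  assumes fE: "finite E"
    and conn: "\<And>S. S \<subseteq> E \<Longrightarrow> S \<noteq> {} \<Longrightarrow> S \<noteq> E \<Longrightarrow>
      fspan ((\<lambda>a. tprod (x a) (y a)) ` S) \<inter> fspan ((\<lambda>a. tprod (x a) (y a)) ` (E - S)) \<noteq> {0}"
  shows "U \<subseteq> E \<Longrightarrow> U \<noteq> {} \<Longrightarrow> fdim (x`E) + fdim (y`E) + fdim ((\<lambda>a. tprod (x a) (y a))`U)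
     \<le> fdim (x`U) + fdim (y`U) + fdim ((\<lambda>a. tprod (x a) (y a))`E)"
proof (induction "card (E - U)" arbitrary: U rule: less_induct)
  case less
  define t where "t = (\<lambda>a. tprod (x a) (y a))"
  show ?case
  proof (cases "U = E")
    case True then show ?thesis by simp
  next
    case False
    have fU: "finite U" using less.prems fE finite_subset by auto
    have "fspan (t`U) \<inter> fspan (t`(E-U)) \<noteq> {0}" using conn[OF less.prems False] by (simp add: t_def)
    moreover have "0 \<in> fspan (t`U) \<inter> fspan (t`(E-U))" by (simp add: fs.span_zero)
    ultimately obtain v where v: "v \<in> fspan (t`U)" "v \<in> fspan (t`(E-U))" "v \<noteq> 0" by blast
    have fEU: "finite (E - U)" using fE by simp
    obtain u0 c where c: "u0 \<in> fspan {}" "v = u0 + (\<Sum>d\<in>E-U. fscale (c d) (t d))"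
      using rep[OF fEU, of v "{}" t] v(2) by auto
    have vc: "v = (\<Sum>d\<in>E-U. fscale (c d) (t d))" using c by simp
    define P where "P D \<longleftrightarrow> D \<subseteq> E - U \<and> D \<noteq> {} \<and> (\<exists>c. (\<forall>d\<in>D. c d \<noteq> 0) \<and>
        (\<Sum>d\<in>D. fscale (c d) (t d)) \<in> fspan (t`U) \<and> (\<Sum>d\<in>D. fscale (c d) (t d)) \<noteq> 0)" for D
    define D0 where "D0 = {d\<in>E-U. c d \<noteq> 0}"
    have "(\<Sum>d\<in>D0. fscale (c d) (t d)) = (\<Sum>d\<in>E-U. fscale (c d) (t d))"
      unfolding D0_def by (rule sum.mono_neutral_left) (use fE in auto)
    then have sD0: "(\<Sum>d\<in>D0. fscale (c d) (t d)) = v" using vc by simp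
    have "D0 \<noteq> {}" using sD0 v(3) by auto
    then have "P D0" unfolding P_def using sD0 v by (auto simp: D0_def)
    then obtain D where PD: "P D" and Dmin: "\<And>DD. P DD \<Longrightarrow> card D \<le> card DD"
      using ex_has_least_nat[of P D0 card] by blast
    from PD obtain c where D: "D \<subseteq> E - U" "D \<noteq> {}" "\<forall>d\<in>D. c d \<noteq> 0"
      "(\<Sum>d\<in>D. fscale (c d) (t d)) \<in> fspan (t`U)" "(\<Sum>d\<in>D. fscale (c d) (t d)) \<noteq> 0"
      unfolding P_def by blast
    have fD: "finite D" using D(1) fE finite_subset by auto
    have Lmin: "(\<Sum>d\<in>D. fscale (f d) (t d)) = 0"
      if "dd \<in> D" "f dd = 0" "(\<Sum>d\<in>D. fscale (f d) (t d)) \<in> fspan (t`U)" for f dd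
    proof (rule ccontr)
      assume nz: "(\<Sum>d\<in>D. fscale (f d) (t d)) \<noteq> 0"
      define DD where "DD = {d\<in>D. f d \<noteq> 0}"
      have s': "(\<Sum>d\<in>DD. fscale (f d) (t d)) = (\<Sum>d\<in>D. fscale (f d) (t d))"
        unfolding DD_def by (rule sum.mono_neutral_left) (use fD in auto)
      have "DD \<noteq> {}" using s' nz by auto
      moreover have "DD \<subseteq> E - U" using D(1) by (auto simp: DD_def)
      moreover have "\<forall>d\<in>DD. f d \<noteq> 0" by (simp add: DD_def)
      ultimately have "P DD" unfolding P_def using s' nz that(3) by auto
      then have "card D \<le> card DD" by (rule Dmin)
      moreover have "card DD < card D" using that fD by (intro psubset_card_mono) (auto simp: DD_def)
      ultimately show False by simp
    qed
    have ind: "\<forall>d0\<in>D. \<forall>e. (\<Sum>d\<in>D-{d0}. fscale (e d) (t d)) \<in> fspan (t`U) \<longrightarrow> (\<forall>d\<in>D-{d0}. e d = 0)"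
    proof (intro ballI allI impI)
      fix d0 e k assume d0: "d0 \<in> D" and he: "(\<Sum>d\<in>D-{d0}. fscale (e d) (t d)) \<in> fspan (t`U)"
        and k: "k \<in> D - {d0}"
      define e' where "e' = e(d0 := 0)"
      have se': "(\<Sum>d\<in>D. fscale (e' d) (t d)) = (\<Sum>d\<in>D-{d0}. fscale (e d) (t d))"
      proof -
        have "(\<Sum>d\<in>D. fscale (e' d) (t d)) = fscale (e' d0) (t d0) + (\<Sum>d\<in>D-{d0}. fscale (e' d) (t d))"
          by (rule sum.remove[OF fD d0])
        also have "(\<Sum>d\<in>D-{d0}. fscale (e' d) (t d)) = (\<Sum>d\<in>D-{d0}. fscale (e d) (t d))"
          by (rule sum.cong) (auto simp: e'_def)
        finally show ?thesis by (simp add: e'_def)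
      qed
      have w0: "(\<Sum>d\<in>D-{d0}. fscale (e d) (t d)) = 0"
        using Lmin[of d0 e'] d0 se' he by (simp add: e'_def)
      show "e k = 0"
      proof (rule ccontr)
        assume ek: "e k \<noteq> 0"
        have e'k: "e' k = e k" using k by (simp add: e'_def)
        define c' where "c' d = c d - (c k / e' k) * e' d" for d
        have c'k: "c' k = 0" using ek e'k by (simp add: c'_def)
        have "(\<Sum>d\<in>D. fscale (c' d) (t d))
            = (\<Sum>d\<in>D. fscale (c d) (t d)) - fscale (c k / e' k) (\<Sum>d\<in>D. fscale (e' d) (t d))"
          by (simp add: c'_def fun_eq_iff fscale_def sum_fun_app algebra_simps sum_subtractf sum_distrib_left)
        also have "\<dots> = (\<Sum>d\<in>D. fscale (c d) (t d))" using se' w0 by simp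
        finally have sc': "(\<Sum>d\<in>D. fscale (c' d) (t d)) = (\<Sum>d\<in>D. fscale (c d) (t d))" .
        have kD: "k \<in> D" using k by simp
        have "(\<Sum>d\<in>D. fscale (c' d) (t d)) = 0" using Lmin[of k c', OF kD c'k] sc' D(4) by simp
        then show False using D(5) sc' by simp
      qed
    qed
    have disj: "U \<inter> D = {}" using D(1) by auto
    have st: "fdim (x`(U\<union>D)) + fdim (y`(U\<union>D)) + fdim (t`U) \<le> fdim (x`U) + fdim (y`U) + fdim (t`(U\<union>D))"
      using step[OF fU fD disj D(2) D(3)] D(4,5) ind unfolding t_def by blast
    have UD: "U \<union> D \<subseteq> E" "U \<union> D \<noteq> {}" using less.prems D(1) by auto
    have "E - (U \<union> D) \<subset> E - U" using D(1,2) by blast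
    then have "card (E - (U \<union> D)) < card (E - U)" using fEU by (rule psubset_card_mono[rotated])
    then have "fdim (x`E) + fdim (y`E) + fdim (t`(U\<union>D)) \<le> fdim (x`(U\<union>D)) + fdim (y`(U\<union>D)) + fdim (t`E)"
      using less.hyps UD unfolding t_def by blast
    then show ?thesis using st unfolding t_def by linarith
  qed
qed

theorem theorem4p2:
  fixes n :: nat
    and x :: "nat \<Rightarrow> ('i \<Rightarrow> 'a::field)"
    and y :: "nat \<Rightarrow> ('j \<Rightarrow> 'a)"
  assumes "n \<ge> 2"
    and "\<And>a. a \<in> {1..n} \<Longrightarrow> x a \<noteq> 0"
    and "\<And>a. a \<in> {1..n} \<Longrightarrow> y a \<noteq> 0"
    and "connected_family n (\<lambda>a. tprod (x a) (y a))"
  shows "fdim (fspan ((\<lambda>a. tprod (x a) (y a)) ` {1..n}))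
           \<ge> fdim (fspan (x ` {1..n})) + fdim (fspan (y ` {1..n})) - 1"
proof -
  define E where "E = {1..n}"
  define t where "t = (\<lambda>a. tprod (x a) (y a))"
  have fE: "finite E" by (simp add: E_def)
  have conn: "fspan (t ` S) \<inter> fspan (t ` (E - S)) \<noteq> {0}"
    if S: "S \<subseteq> E" "S \<noteq> {}" "S \<noteq> E" for S
  proof
    assume eq: "fspan (t ` S) \<inter> fspan (t ` (E - S)) = {0}"
    have fS: "finite S" using S(1) fE finite_subset by auto
    have c1: "1 \<le> card S" using S(2) fS by (simp add: card_gt_0_iff Suc_le_eq)
    have "card S < card E" using S fE by (intro psubset_card_mono) auto
    then have c2: "card S \<le> n - 1" by (simp add: E_def)
    have "t ` E = t ` S \<union> t ` (E - S)" using S(1) by auto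
    then have sp: "fspan (t ` E) = {p + q |p q. p \<in> fspan (t ` S) \<and> q \<in> fspan (t ` (E - S))}"
      using fs.span_Un by simp
    have "splits n t"
      unfolding splits_def using S(1) c1 c2 sp eq by (auto simp: E_def)
    then show False using assms(4) by (simp add: connected_family_def t_def)
  qed
  have oneE: "1 \<in> E" using assms(1) by (simp add: E_def)
  have mi: "fdim (x`E) + fdim (y`E) + fdim (t`{1}) \<le> fdim (x`{1}) + fdim (y`{1}) + fdim (t`E)"
    using main_ind[OF fE, of x y "{1}"] conn oneE unfolding t_def by blast
  have dx: "fdim (x`{1}) \<le> 1"
    using fs.dim_le_card[of "{x 1}" "{x 1}"] fs.span_superset[of "{x 1}"] by simp
  have dy: "fdim (y`{1}) \<le> 1"
    using fs.dim_le_card[of "{y 1}" "{y 1}"] fs.span_superset[of "{y 1}"] by simp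
  obtain i where i: "x 1 i \<noteq> 0" using assms(2)[OF oneE[unfolded E_def]] by (auto simp: fun_eq_iff)
  obtain j where j: "y 1 j \<noteq> 0" using assms(3)[OF oneE[unfolded E_def]] by (auto simp: fun_eq_iff)
  have "t 1 (i, j) \<noteq> 0" using i j by (simp add: t_def tprod_def)
  then have t1: "t 1 \<noteq> 0" by auto
  have dt: "fdim (t`{1}) = 1"
    using fs.dim_eq_card_independent[of "{t 1}"] t1 fs.dependent_single[of "t 1"] by simp
  have "fdim (x`E) + fdim (y`E) - 1 \<le> fdim (t`E)" using mi dx dy dt by linarith
  then show ?thesis by (simp add: E_def t_def)
qed

end
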